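(* Let $\pi$ be a two-stack sortable permutation and $D(\pi)=(\pi_1,\pi_2)$. Then either $\pi=C_1(\pi_1,\pi_2)$, or $\pi=C_2(\pi_1,\pi_2,i)$ for some $1\le i\le\operatorname{slmax}(\pi_2)$.
   Context: For a finite sequence $A$ of distinct integers, the stack-sorting operator $\mathcal{S}$ is defined by $\mathcal{S}(\epsilon)=\epsilon$ for the empty sequence and, if $A$ is non-empty with largest element $m$, writing $A=A_L\cdot(m)\cdot A_R$ (concatenation), $\mathcal{S}(A)=\mathcal{S}(A_L)\cdot\mathcal{S}(A_R)\cdot(m)$. A permutation $\sigma\in\mathfrak{S}_n$, $n\ge1$, viewed as a sequence, is two-stack sortable if $\mathcal{S}(\mathcal{S}(\sigma))$ is the identity. For a sequence $A$ of distinct integers, $P(A)$ is the permutation with the same relative order as $A$ ($P(\epsilon)=\epsilon$). For a permutation $\pi$ of length $n\ge1$ written $\pi=\pi_\ell\cdot(n)\cdot\pi_r$ (parts before and after the entry $n$), $D(\pi)=(P(\pi_\ell),P(\pi_r))$. For a sequence $\tau$: $\tau^{+k}$ adds $k$ to each element; for $k_1<k_2$, $\tau^{+(k_1,m,k_2)}$ adds $k_1$ to elements strictly smaller than $m$ and $k_2$ to the others. $\operatorname{slmax}(\sigma)$ is the number of left-to-right maxima of $\mathcal{S}(\sigma)$ ($\operatorname{slmax}(\epsilon)=0$). For permutations $\pi_1\in\mathfrak{S}_k$, $\pi_2\in\mathfrak{S}_\ell$ (possibly empty), $C_1(\pi_1,\pi_2)=\pi_1\cdot(k+\ell+1)\cdot\pi_2^{+k}$;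 for non-empty $\pi_1,\pi_2$, with $a_1,\dots,a_t$ the values of the left-to-right maxima of $\mathcal{S}(\pi_2)$ in order and $1\le i\le t$, $C_2(\pi_1,\pi_2,i)=\pi_1^{+(0,k,a_i)}\cdot(k+\ell+1)\cdot\pi_2^{+(k-1,a_i+1,k)}$. *)

theory Defs
  imports Main
begin

(* Sequences of distinct integers are modelled as lists of naturals
   (only relative order matters; permutations have entries 1..n). *)

function stack_sort :: "nat list \<Rightarrow> nat list" where
  "stack_sort xs =
     (if xs = [] then []
      else (let m = Max (set xs)
            in stack_sort (takeWhile (\<lambda>x. x \<noteq> m) xs)
               @ stack_sort (tl (dropWhile (\<lambda>x. x \<noteq> m) xs)) @ [m]))"
  by pat_completeness auto
termination
proof (relation "measure length")
  show "wf (measure length)" by simp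
next
  fix xs :: "nat list" and m
  assume "xs \<noteq> []" "m = Max (set xs)"
  then have "m \<in> set xs" by simp
  then show "(takeWhile (\<lambda>x. x \<noteq> m) xs, xs) \<in> measure length"
    by (induction xs) auto
next
  fix xs :: "nat list" and m
  assume "xs \<noteq> []" "m = Max (set xs)"
  then show "(tl (dropWhile (\<lambda>x. x \<noteq> m) xs), xs) \<in> measure length"
  proof -
    have a: "length (dropWhile (\<lambda>x. x \<noteq> m) xs) \<le> length xs" by (rule length_dropWhile_le)
    have b: "length xs > 0" using \<open>xs \<noteq> []\<close> by simp
    from a b show ?thesis by (simp only: length_tl in_measure)
  qed
qed

declare stack_sort.simps[simp del]

definition is_perm :: "nat list \<Rightarrow> bool" where
  "is_perm \<pi> \<longleftrightarrow> distinct \<pi> \<and> set \<pi> = {1..length \<pi>}"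

definition two_stack_sortable :: "nat list \<Rightarrow> bool" where
  "two_stack_sortable \<sigma> \<longleftrightarrow> stack_sort (stack_sort \<sigma>) = [1..<length \<sigma> + 1]"

definition std :: "nat list \<Rightarrow> nat list" where
  "std A = map (\<lambda>x. card {y \<in> set A. y \<le> x}) A"

definition decomp :: "nat list \<Rightarrow> nat list \<times> nat list" where
  "decomp \<pi> = (std (takeWhile (\<lambda>x. x \<noteq> length \<pi>) \<pi>),
                std (tl (dropWhile (\<lambda>x. x \<noteq> length \<pi>) \<pi>)))"

definition shift :: "nat \<Rightarrow> nat list \<Rightarrow> nat list" where
  "shift k \<tau> = map (\<lambda>x. x + k) \<tau>"

definition shift3 :: "nat \<Rightarrow> nat \<Rightarrow> nat \<Rightarrow> nat list \<Rightarrow> nat list" where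
  "shift3 k1 m k2 \<tau> = map (\<lambda>x. if x < m then x + k1 else x + k2) \<tau>"

definition ltr_max_vals :: "nat list \<Rightarrow> nat list" where
  "ltr_max_vals xs = [xs ! j. j \<leftarrow> [0..<length xs], \<forall>i<j. xs ! i < xs ! j]"

definition slmax :: "nat list \<Rightarrow> nat" where
  "slmax \<sigma> = length (ltr_max_vals (stack_sort \<sigma>))"

definition C1 :: "nat list \<Rightarrow> nat list \<Rightarrow> nat list" where
  "C1 \<pi>1 \<pi>2 = \<pi>1 @ [length \<pi>1 + length \<pi>2 + 1] @ shift (length \<pi>1) \<pi>2"

(* i is 1-based: a_i = ltr_max_vals (S pi2) ! (i - 1) *)
definition C2 :: "nat list \<Rightarrow> nat list \<Rightarrow> nat \<Rightarrow> nat list" where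
  "C2 \<pi>1 \<pi>2 i =
     (let k = length \<pi>1; l = length \<pi>2; a = ltr_max_vals (stack_sort \<pi>2) ! (i - 1)
      in shift3 0 k a \<pi>1 @ [k + l + 1] @ shift3 (k - 1) (a + 1) k \<pi>2)"

end

theory Submission imports Defs "HOL-Library.Multiset" begin

lemma split_at_max: "m \<in> set xs \<Longrightarrow> xs = takeWhile (\<lambda>x. x \<noteq> m) xs @ m # tl (dropWhile (\<lambda>x. x \<noteq> m) xs)"
  by (induction xs) auto

lemma ss_unfold:
  assumes "xs = A @ m # B" "m \<notin> set A" "m = Max (set xs)"
  shows "stack_sort xs = stack_sort A @ stack_sort B @ [m]"
proof -
  have ne: "xs \<noteq> []" using assms(1) by simp
  have nA: "\<And>x. x \<in> set A \<Longrightarrow> x \<noteq> m" using assms(2) by auto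
  have t: "takeWhile (\<lambda>x. x \<noteq> m) xs = A" using assms(1) nA by (simp add: takeWhile_append2)
  have d: "dropWhile (\<lambda>x. x \<noteq> m) xs = m # B" using assms(1) nA by (simp add: dropWhile_append2)
  show ?thesis
    apply (subst stack_sort.simps)
    unfolding Let_def assms(3)[symmetric] using ne t d by simp
qed

lemma ss_mset: "mset (stack_sort xs) = mset xs"
proof (induction xs rule: stack_sort.induct)
  case (1 xs)
  show ?case
  proof (cases "xs = []")
    case True then show ?thesis by (subst stack_sort.simps) simp
  next
    case False
    define m where "m = Max (set xs)"
    have mi: "m \<in> set xs" using False m_def by simp
    define A where "A = takeWhile (\<lambda>x. x \<noteq> m) xs"
    define B where "B = tl (dropWhile (\<lambda>x. x \<noteq> m) xs)"
    have xs: "xs = A @ m # B" using split_at_max[OF mi] A_def B_def by simp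
    have mA: "m \<notin> set A" unfolding A_def by (metis (mono_tags) set_takeWhileD)
    have "stack_sort xs = stack_sort A @ stack_sort B @ [m]" using ss_unfold[OF xs mA m_def] .
    moreover have "mset (stack_sort A) = mset A" using 1(1)[OF False m_def] A_def by simp
    moreover have "mset (stack_sort B) = mset B" using 1(2)[OF False m_def] B_def by simp
    moreover have "mset xs = mset A + mset B + {#m#}" by (subst xs) simp
    ultimately show ?thesis by simp
  qed
qed

lemma ss_set[simp]: "set (stack_sort xs) = set xs"
  by (rule mset_eq_setD[OF ss_mset])

lemma ss_distinct: "distinct xs \<Longrightarrow> distinct (stack_sort xs)"
  using mset_eq_imp_distinct_iff[OF ss_mset] by simp

lemma ss_length[simp]: "length (stack_sort xs) = length xs"
  by (rule mset_eq_length[OF ss_mset])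

lemma no231:
  "sorted (stack_sort xs) \<Longrightarrow> xs = u @ c # v \<Longrightarrow> b \<in> set u \<Longrightarrow> a \<in> set v \<Longrightarrow> a < b \<Longrightarrow> b < c \<Longrightarrow> False"
proof (induction xs arbitrary: u v rule: stack_sort.induct)
  case (1 xs)
  have False0: "xs \<noteq> []" using 1(4) by simp
  define m where "m = Max (set xs)"
  have mi: "m \<in> set xs" using False0 m_def by simp
  define A where "A = takeWhile (\<lambda>x. x \<noteq> m) xs"
  define B where "B = tl (dropWhile (\<lambda>x. x \<noteq> m) xs)"
  have xs: "xs = A @ m # B" using split_at_max[OF mi] A_def B_def by simp
  have mA: "m \<notin> set A" unfolding A_def by (metis (mono_tags) set_takeWhileD)
  have ss: "stack_sort xs = stack_sort A @ stack_sort B @ [m]" using ss_unfold[OF xs mA m_def] .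
  have sA: "sorted (stack_sort A)" and sB: "sorted (stack_sort B)"
    and cross: "\<And>x y. x \<in> set A \<Longrightarrow> y \<in> set B \<Longrightarrow> x \<le> y"
    using 1(3) unfolding ss by (auto simp: sorted_append)
  have cm: "c \<le> m" using 1(4) m_def by simp
  have key: "b \<in> set A \<Longrightarrow> a \<in> set B \<Longrightarrow> False" using cross 1(7) by force
  from 1(4) xs have eq: "u @ c # v = A @ m # B" by simp
  then obtain us where "(u = A @ us \<and> us @ c # v = m # B) \<or> (u @ us = A \<and> c # v = us @ m # B)"
    by (auto simp: append_eq_append_conv2)
  then show False
  proof
    assume h: "u = A @ us \<and> us @ c # v = m # B"
    show False
    proof (cases us)
      case Nil
      then have "u = A" "v = B" using h by simp_all
      then have "b \<in> set A" "a \<in> set B" using 1(5,6) by simp_all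
      then show ?thesis by (rule key)
    next
      case (Cons y us')
      then have u: "u = A @ m # us'" and B: "B = us' @ c # v" using h by auto
      have "b \<in> set A \<or> b \<in> set us'" using u 1(5,7,8) cm by auto
      then show ?thesis
      proof
        assume bA: "b \<in> set A"
        have "a \<in> set B" using B 1(6) by simp
        then show ?thesis using key bA by blast
      next
        assume "b \<in> set us'"
        show ?thesis
          apply (rule 1(2)[OF False0 m_def, of us' v, folded B_def])
          using sB B 1(6,7,8) \<open>b \<in> set us'\<close> by simp_all
      qed
    qed
  next
    assume h: "u @ us = A \<and> c # v = us @ m # B"
    show False
    proof (cases us)
      case Nil
      then have "u = A" "v = B" using h by simp_all
      then have "b \<in> set A" "a \<in> set B" using 1(5,6) by simp_all
      then show ?thesis by (rule key)
    next
      case (Cons y us')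
      then have A: "A = u @ c # us'" and v: "v = us' @ m # B" using h by auto
      have "a \<in> set us' \<or> a \<in> set B" using v 1(6,7,8) cm by auto
      then show ?thesis
      proof
        assume aB: "a \<in> set B"
        have "b \<in> set A" using A 1(5) by simp
        then show ?thesis using key aB by blast
      next
        assume "a \<in> set us'"
        show ?thesis
          apply (rule 1(1)[OF False0 m_def, of u us', folded A_def])
          using sA A 1(5,7,8) \<open>a \<in> set us'\<close> by simp_all
      qed
    qed
  qed
qed


lemma ss_nil[simp]: "stack_sort [] = []"
  by (subst stack_sort.simps) simp

lemma ss_map:
  "(\<forall>x\<in>set xs. \<forall>y\<in>set xs. x < y \<longrightarrow> g x < g y) \<Longrightarrow> stack_sort (map g xs) = map g (stack_sort xs)"
proof (induction xs rule: stack_sort.induct)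
  case (1 xs)
  show ?case
  proof (cases "xs = []")
    case True then show ?thesis by simp
  next
    case False
    define m where "m = Max (set xs)"
    have mi: "m \<in> set xs" using False m_def by simp
    define A where "A = takeWhile (\<lambda>x. x \<noteq> m) xs"
    define B where "B = tl (dropWhile (\<lambda>x. x \<noteq> m) xs)"
    have xs: "xs = A @ m # B" using split_at_max[OF mi] A_def B_def by simp
    have mA: "m \<notin> set A" unfolding A_def by (metis (mono_tags) set_takeWhileD)
    have mono: "\<And>x y. x \<in> set xs \<Longrightarrow> y \<in> set xs \<Longrightarrow> x < y \<Longrightarrow> g x < g y" using 1(3) by blast
    have mx: "map g xs = map g A @ g m # map g B" using xs by simp
    have gmA: "g m \<notin> set (map g A)"
    proof
      assume "g m \<in> set (map g A)"
      then obtain x where x: "x \<in> set A" "g x = g m" by auto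
      have xi: "x \<in> set xs" using x xs by simp
      have "x \<noteq> m" using x mA by auto
      then have "x < m \<or> m < x" by arith
      then show False using mono[OF xi mi] mono[OF mi xi] x by auto
    qed
    have gmax: "g m = Max (set (map g xs))"
    proof (rule Max_eqI[symmetric])
      show "finite (set (map g xs))" by simp
      show "g m \<in> set (map g xs)" using mi by simp
      fix y assume "y \<in> set (map g xs)"
      then obtain x where x: "x \<in> set xs" "y = g x" by auto
      have "x \<le> m" using x m_def by simp
      then show "y \<le> g m" using mono[OF x(1) mi] x by (cases "x = m") auto
    qed
    have sA: "set A \<subseteq> set xs" and sB: "set B \<subseteq> set xs" using xs by auto
    have "stack_sort (map g xs) = stack_sort (map g A) @ stack_sort (map g B) @ [g m]"
      by (rule ss_unfold[OF mx gmA gmax])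
    also have "stack_sort (map g A) = map g (stack_sort A)"
      using 1(1)[OF False m_def] A_def 1(3) sA by blast
    also have "stack_sort (map g B) = map g (stack_sort B)"
      using 1(2)[OF False m_def] B_def 1(3) sB by blast
    also have "stack_sort xs = stack_sort A @ stack_sort B @ [m]" by (rule ss_unfold[OF xs mA m_def])
    ultimately show ?thesis by simp
  qed
qed

lemma ltr_mem:
  assumes "xs = p @ x # q" "\<forall>y\<in>set p. y < x"
  shows "x \<in> set (ltr_max_vals xs)"
proof -
  have j: "length p < length xs" using assms(1) by simp
  have xj: "xs ! length p = x" using assms(1) by simp
  have "\<forall>i<length p. xs ! i < xs ! length p"
    using assms by (auto simp: nth_append)
  then show ?thesis unfolding ltr_max_vals_def using j xj by force
qed

lemma downclosed:
  assumes "finite S" "0 \<notin> S" "\<And>x z. x \<in> S \<Longrightarrow> 1 \<le> z \<Longrightarrow> z \<le> x \<Longrightarrow> z \<in> S"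
  shows "S = {1..card S}"
proof -
  have sub: "S \<subseteq> {1..card S}"
  proof
    fix x assume x: "x \<in> S"
    have "{1..x} \<subseteq> S" using assms(3)[OF x] by auto
    then have "card {1..x} \<le> card S" by (rule card_mono[OF assms(1)])
    moreover have "x \<ge> 1" using x assms(2) by (cases x) auto
    ultimately show "x \<in> {1..card S}" by simp
  qed
  show ?thesis by (rule card_subset_eq[OF _ sub]) simp_all
qed


theorem proposition8:
  fixes \<pi> \<pi>1 \<pi>2 :: "nat list"
  assumes "is_perm \<pi>" and "length \<pi> \<ge> 1"
    and "two_stack_sortable \<pi>"
    and "decomp \<pi> = (\<pi>1, \<pi>2)"
  shows "\<pi> = C1 \<pi>1 \<pi>2 \<or>
         (\<pi>1 \<noteq> [] \<and> \<pi>2 \<noteq> [] \<and>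
          (\<exists>i. 1 \<le> i \<and> i \<le> slmax \<pi>2 \<and> \<pi> = C2 \<pi>1 \<pi>2 i))"
proof -
  define n where "n = length \<pi>"
  have dist: "distinct \<pi>" and setp: "set \<pi> = {1..n}" using assms(1) unfolding is_perm_def n_def by auto
  have n1: "n \<ge> 1" using assms(2) n_def by simp
  have nin: "n \<in> set \<pi>" using setp n1 by auto
  define L where "L = takeWhile (\<lambda>x. x \<noteq> n) \<pi>"
  define R where "R = tl (dropWhile (\<lambda>x. x \<noteq> n) \<pi>)"
  have pi: "\<pi> = L @ n # R" using split_at_max[OF nin] L_def R_def by simp
  have d1: "\<pi>1 = std L" and d2: "\<pi>2 = std R" using assms(4) unfolding decomp_def L_def R_def n_def by auto
  have nL: "n \<notin> set L" and nR: "n \<notin> set R" and dLR: "set L \<inter> set R = {}"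
    and distL: "distinct L" and distR: "distinct R" using dist pi by auto
  have setLR: "set L \<union> set R = {1..n} - {n}" using setp pi nL nR by auto
  have lenp: "n = length L + length R + 1" unfolding n_def by (subst pi) simp
  have maxp: "n = Max (set \<pi>)" unfolding setp by (rule Max_eqI[symmetric]) (use n1 in auto)
  have Sp: "stack_sort \<pi> = stack_sort L @ stack_sort R @ [n]" by (rule ss_unfold[OF pi nL maxp])
  define X where "X = stack_sort L @ stack_sort R"
  have Sp2: "stack_sort \<pi> = X @ n # []" using Sp X_def by simp
  have nX: "n \<notin> set X" using nL nR X_def by simp
  have maxX: "n = Max (set (stack_sort \<pi>))" using maxp by simp
  have "stack_sort (stack_sort \<pi>) = stack_sort X @ stack_sort [] @ [n]" by (rule ss_unfold[OF Sp2 nX maxX])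
  then have "stack_sort X @ [n] = [1..<n+1]" using assms(3) unfolding two_stack_sortable_def n_def by simp
  then have "sorted (stack_sort X @ [n])" by (metis sorted_upt)
  then have sX: "sorted (stack_sort X)" by (simp add: sorted_append)
  note P231 = no231[OF sX]
  have lenstd: "\<And>A. length (std A) = length A" unfolding std_def by simp
  show ?thesis
  proof (cases "L = []")
    case True
    have "set R = {1..n} - {n}" using setLR True by simp
    also have "\<dots> = {1..n-1}" using n1 by auto
    finally have setR: "set R = {1..n-1}" .
    have "std R = R" unfolding std_def
    proof (rule map_idI)
      fix y assume y: "y \<in> set R"
      have "{z \<in> set R. z \<le> y} = {1..y}" using setR y by auto
      then show "card {z \<in> set R. z \<le> y} = y" by simp
    qed
    then have "\<pi> = C1 \<pi>1 \<pi>2" using True d1 d2 pi lenp unfolding C1_def shift_def std_def by simp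
    then show ?thesis by simp
  next
    case False
    define k where "k = length L"
    define M where "M = Max (set L)"
    have Mi: "M \<in> set L" using False M_def by simp
    define A where "A = takeWhile (\<lambda>x. x \<noteq> M) L"
    define B where "B = tl (dropWhile (\<lambda>x. x \<noteq> M) L)"
    have Lsp: "L = A @ M # B" using split_at_max[OF Mi] A_def B_def by simp
    have MA: "M \<notin> set A" unfolding A_def by (metis (mono_tags) set_takeWhileD)
    have SL: "stack_sort L = stack_sort A @ stack_sort B @ [M]" by (rule ss_unfold[OF Lsp MA M_def])
    have Xe: "X = (stack_sort A @ stack_sort B) @ M # stack_sort R" using SL X_def by simp
    have xM: "\<And>x. x \<in> set L \<Longrightarrow> x \<noteq> M \<Longrightarrow> x < M"
      using M_def by (metis Max_ge List.finite_set le_neq_implies_less)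
    have lt: "\<And>x y. x \<in> set L \<Longrightarrow> y \<in> set R \<Longrightarrow> x \<noteq> M \<Longrightarrow> x < y"
    proof (rule ccontr)
      fix x y assume x: "x \<in> set L" and y: "y \<in> set R" and xn: "x \<noteq> M" and nlt: "\<not> x < y"
      have "x \<noteq> y" using x y dLR by auto
      then have yx: "y < x" using nlt by simp
      have xAB: "x \<in> set (stack_sort A @ stack_sort B)" using x xn Lsp by simp
      have yR: "y \<in> set (stack_sort R)" using y by simp
      show False by (rule P231[OF Xe xAB yR yx xM[OF x xn]])
    qed
    have ord: "\<And>p q z1 z2. stack_sort R = p @ z1 # q \<Longrightarrow> M < z1 \<Longrightarrow> z2 \<in> set q \<Longrightarrow> z2 < M \<Longrightarrow> False"
    proof -
      fix p q z1 z2 assume h: "stack_sort R = p @ z1 # q" "M < z1" "z2 \<in> set q" "z2 < M"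
      have "X = (stack_sort A @ stack_sort B @ M # p) @ z1 # q" using Xe h(1) by simp
      moreover have "M \<in> set (stack_sort A @ stack_sort B @ M # p)" by simp
      ultimately show False by (rule P231[OF _ _ h(3) h(4) h(2)])
    qed
    have Lsub: "set L \<subseteq> {1..n} - {n}" using setLR by blast
    have Rsub: "set R \<subseteq> {1..n} - {n}" using setLR by blast
    define S0 where "S0 = set L - {M}"
    have cS0: "card S0 = k - 1" unfolding S0_def k_def using distL Mi by (simp add: distinct_card)
    have S0eq: "S0 = {1..card S0}"
    proof (rule downclosed)
      show "finite S0" unfolding S0_def by simp
      show "0 \<notin> S0" unfolding S0_def using Lsub by auto
      fix x z assume x: "x \<in> S0" and z1: "1 \<le> z" and zx: "z \<le> x"
      have xL: "x \<in> set L" and xn: "x \<noteq> M" using x S0_def by auto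
      have xlt: "x < M" using xM[OF xL xn] .
      have "x \<in> {1..n} - {n}" using xL Lsub by blast
      then have "z \<in> {1..n} - {n}" using z1 zx by auto
      then have "z \<in> set L \<or> z \<in> set R" using setLR by blast
      moreover have "z \<notin> set R"
      proof
        assume zR: "z \<in> set R"
        have "x < z" by (rule lt[OF xL zR xn])
        then show False using zx by simp
      qed
      ultimately have "z \<in> set L" by blast
      then show "z \<in> S0" unfolding S0_def using zx xlt by auto
    qed
    have S0k: "S0 = {1..k-1}" using S0eq cS0 by simp
    have setL: "set L = {1..k-1} \<union> {M}" using S0k Mi unfolding S0_def by auto
    have M1: "M \<ge> 1" using Mi Lsub by auto
    have Mk: "M \<ge> k"
    proof (rule ccontr)
      assume "\<not> M \<ge> k"
      then have "M \<in> S0" using S0k M1 by auto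
      then show False unfolding S0_def by simp
    qed
    have Mn: "M < n" using Mi Lsub by auto
    have k1: "k \<ge> 1" using False k_def by (cases L) auto
    have setR: "set R = {k..n-1} - {M}"
    proof -
      have "set R = (set L \<union> set R) - set L" using dLR by auto
      also have "\<dots> = ({1..n} - {n}) - set L" unfolding setLR ..
      also have "\<dots> = {k..n-1} - {M}" unfolding setL using k1 Mk Mn by auto
      finally show ?thesis .
    qed
    define f where "f = (\<lambda>x::nat. if x < k then x else k)"
    have stdL: "std L = map f L" unfolding std_def
    proof (rule map_cong[OF refl])
      fix x assume xL: "x \<in> set L"
      show "card {y \<in> set L. y \<le> x} = f x"
      proof (cases "x < k")
        case True
        have "{y \<in> set L. y \<le> x} = {1..x}" unfolding setL using True Mk by auto
        then show ?thesis using True f_def by simp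
      next
        case False
        then have xMe: "x = M" using xL setL by auto
        have "{y \<in> set L. y \<le> x} = set L" using xMe M_def by auto
        then show ?thesis using False f_def distL k_def by (simp add: distinct_card)
      qed
    qed
    define g where "g = (\<lambda>y::nat. if y < M then y + 1 - k else y - k)"
    have stdR: "std R = map g R" unfolding std_def
    proof (rule map_cong[OF refl])
      fix y assume yR: "y \<in> set R"
      have yk: "k \<le> y" "y \<le> n - 1" "y \<noteq> M" using yR unfolding setR by auto
      show "card {z \<in> set R. z \<le> y} = g y"
      proof (cases "y < M")
        case True
        have "{z \<in> set R. z \<le> y} = {k..y}" unfolding setR using True yk by auto
        then show ?thesis using True g_def by simp
      next
        case False
        then have yM: "y > M" using yk by auto
        have "{z \<in> set R. z \<le> y} = {k..y} - {M}" unfolding setR using yM yk by auto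
        then show ?thesis using yM g_def Mk by (simp add: card_Diff_singleton)
      qed
    qed
    show ?thesis
    proof (cases "M = k")
      case True
      have "map f L = L" by (rule map_idI) (use setL True f_def in auto)
      then have p1: "\<pi>1 = L" using d1 stdL by simp
      have "shift k \<pi>2 = R" unfolding d2 stdR shift_def map_map
        by (rule map_idI) (use True g_def in \<open>auto simp: setR\<close>)
      then have "\<pi> = C1 \<pi>1 \<pi>2" unfolding C1_def using p1 pi lenp k_def lenstd d2 by simp
      then show ?thesis by simp
    next
      case False
      then have Mk': "M > k" using Mk by simp
      define a where "a = M - k"
      have M1R: "M - 1 \<in> set R" unfolding setR using Mk' Mn by auto
      have p2ne: "\<pi>2 \<noteq> []" using M1R d2 lenstd[of R] by auto
      have p1ne: "\<pi>1 \<noteq> []" using d1 lenstd[of L] k_def k1 by auto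
      have gmono: "\<forall>x\<in>set R. \<forall>y\<in>set R. x < y \<longrightarrow> g x < g y" unfolding setR g_def using Mk by auto
      have Sp2': "stack_sort \<pi>2 = map g (stack_sort R)" using ss_map[OF gmono] d2 stdR by simp
      have "M - 1 \<in> set (stack_sort R)" using M1R by simp
      then obtain p q where pq: "stack_sort R = p @ (M - 1) # q" by (meson split_list)
      have distSR: "distinct (stack_sort R)" using distR by (rule ss_distinct)
      have pbelow: "\<forall>z\<in>set p. z < M - 1"
      proof
        fix z assume zp: "z \<in> set p"
        have zne: "z \<noteq> M - 1" using distSR pq zp by auto
        have zR: "z \<in> set R" using pq zp by (metis ss_set in_set_conv_decomp Un_iff set_append)
        have "z \<noteq> M" using zR unfolding setR by auto
        moreover have "\<not> z > M"
        proof
          assume zM: "z > M"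
          obtain p1 p2 where "p = p1 @ z # p2" using zp by (meson split_list)
          then have "stack_sort R = p1 @ z # (p2 @ (M - 1) # q)" using pq by simp
          moreover have "M - 1 \<in> set (p2 @ (M - 1) # q)" by simp
          moreover have "M - 1 < M" using Mk' by simp
          ultimately show False using ord zM by blast
        qed
        ultimately show "z < M - 1" using zne by auto
      qed
      have ga: "g (M - 1) = a" unfolding g_def a_def using Mk' by auto
      have "stack_sort \<pi>2 = map g p @ a # map g q" using Sp2' pq ga by simp
      moreover have "\<forall>y\<in>set (map g p). y < a"
      proof
        fix y assume "y \<in> set (map g p)"
        then obtain z where z: "z \<in> set p" "y = g z" by auto
        have zR: "z \<in> set R" using pq z(1) by (metis ss_set in_set_conv_decomp Un_iff set_append)
        have "g z < g (M - 1)" using gmono zR M1R pbelow z(1) by blast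
        then show "y < a" using z ga by simp
      qed
      ultimately have ain: "a \<in> set (ltr_max_vals (stack_sort \<pi>2))" by (rule ltr_mem)
      then obtain j where j: "j < length (ltr_max_vals (stack_sort \<pi>2))" "ltr_max_vals (stack_sort \<pi>2) ! j = a"
        by (meson in_set_conv_nth)
      have "\<pi> = C2 \<pi>1 \<pi>2 (j + 1)"
      proof -
        have l1: "length \<pi>1 = k" using d1 lenstd k_def by simp
        have l2: "length \<pi>2 = length R" using d2 lenstd by simp
        have e1: "shift3 0 k a \<pi>1 = L" unfolding d1 stdL shift3_def map_map
          by (rule map_idI) (use setL f_def a_def Mk' in auto)
        have e2: "shift3 (k - 1) (a + 1) k \<pi>2 = R" unfolding d2 stdR shift3_def map_map
        proof (rule map_idI)
          fix y assume yR: "y \<in> set R"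
          have yk: "k \<le> y" "y \<noteq> M" using yR unfolding setR by auto
          show "((\<lambda>x. if x < a + 1 then x + (k - 1) else x + k) \<circ> g) y = y"
          proof (cases "y < M")
            case True
            then show ?thesis using yk k1 Mk' unfolding g_def a_def by auto
          next
            case False
            then have "y > M" using yk by simp
            then show ?thesis using yk k1 Mk' unfolding g_def a_def by auto
          qed
        qed
        show ?thesis unfolding C2_def Let_def l1 l2 using j(2) e1 e2 pi lenp k_def by simp
      qed
      moreover have "1 \<le> j + 1" "j + 1 \<le> slmax \<pi>2" using j(1) unfolding slmax_def by auto
      ultimately show ?thesis using p1ne p2ne by blast
    qed
  qed
qed

end
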